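(* Let $L\ge0$ and $R\ge1$ be integers and let $V$ be the space of $R$-tuples $f=(f[1],\ldots,f[R])$ of functions on the sphere $S^2$ of the form $f[r](\theta,\varphi)=\sum_{\ell=0}^L\sum_{m=-\ell}^\ell A_\ell^m[r]\,Y_\ell^m(\theta,\varphi)$ with $A_\ell^m[r]\in\mathbb C$, on which $SO(3)$ acts shell-wise by $(g\cdot f)[r](x)=f[r](g^{-1}x)$. Let $T$ be the tomographic (slice) operator $T h(\varphi)=h(\pi/2,\varphi)$ restricting a function on $S^2$ to the equator. Define the unprojected second moment of $f$ as the collection of functions $$m^2_f[r_1,r_2](\theta_1,\varphi_1,\theta_2,\varphi_2)=\int_{SO(3)}(g\cdot f)[r_1](\theta_1,\varphi_1)\,\overline{(g\cdot f)[r_2](\theta_2,\varphi_2)}\,dg,\quad r_1,r_2\in\{1,\ldots,R\},$$ and the projected (cryo-EM) second moment as $$\int_{SO(3)}T\big((g\cdot f)[r_1]\big)(\varphi_1)\,\overline{T\big((g\cdot f)[r_2]\big)(\varphi_2)}\,dg,\quad r_1,r_2\in\{1,\ldots,R\}.$$ Then the projected second moment of $f$ determines the unprojected second moment of $f$ and conversely; in particular, for $f,f'\in V$ the projected second moments coincide if and only if the unprojected second moments coincide.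
   Context: $Y_\ell^m$ ($-\ell\le m\le\ell$) are the spherical harmonics of degree $\ell$, forming an orthonormal basis of the $(2\ell+1)$-dimensional irreducible representation of $SO(3)$; $(\theta,\varphi)$ are spherical coordinates; $dg$ is the normalized Haar measure on $SO(3)$. In cryo-EM, $f$ models a radially discretized (with $R$ shells), bandlimited (bandlimit $L$) Fourier transform of a 3-D structure, and by the Fourier slice theorem the tomographic projection corresponds to restriction to a central plane, here the equator $\theta=\pi/2$. *)

theory Defs
  imports "HOL-Probability.Probability" "HOL-Computational_Algebra.Polynomial"
begin

definition legendre_poly :: "nat \<Rightarrow> real poly" where
  "legendre_poly l = smult (1 / (2 ^ l * fact l)) ((pderiv ^^ l) ([:-1, 0, 1:] ^ l))"

text \<open>Associated Legendre function P_l^m(x) for m >= 0 (Condon-Shortley phase).\<close>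
definition assoc_legendre :: "nat \<Rightarrow> nat \<Rightarrow> real \<Rightarrow> real" where
  "assoc_legendre l m x =
     (-1) ^ m * (1 - x\<^sup>2) powr (real m / 2) * poly ((pderiv ^^ m) (legendre_poly l)) x"

definition sph_harm_nonneg :: "nat \<Rightarrow> nat \<Rightarrow> real \<Rightarrow> real \<Rightarrow> complex" where
  "sph_harm_nonneg l m \<theta> \<phi> =
     complex_of_real (sqrt ((2 * real l + 1) / (4 * pi) * (fact (l - m) / fact (l + m)))
                      * assoc_legendre l m (cos \<theta>))
     * exp (\<i> * of_nat m * complex_of_real \<phi>)"

definition sph_harm :: "nat \<Rightarrow> int \<Rightarrow> real \<Rightarrow> real \<Rightarrow> complex" where
  "sph_harm l m \<theta> \<phi> =
     (if m \<ge> 0 then sph_harm_nonneg l (nat m) \<theta> \<phi>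
      else (-1) ^ nat (- m) * cnj (sph_harm_nonneg l (nat (- m)) \<theta> \<phi>))"

text \<open>Element of V: R-tuple (indexed by r) of bandlimited functions with coefficients
  A l m r, written as functions of spherical coordinates (theta, phi).\<close>
definition bandlimited :: "nat \<Rightarrow> (nat \<Rightarrow> int \<Rightarrow> nat \<Rightarrow> complex) \<Rightarrow> nat \<Rightarrow> real \<Rightarrow> real \<Rightarrow> complex" where
  "bandlimited L A r \<theta> \<phi> =
     (\<Sum>l\<le>L. \<Sum>m\<in>{- int l..int l}. A l m r * sph_harm l m \<theta> \<phi>)"

definition sph_pt :: "real \<Rightarrow> real \<Rightarrow> real^3" where
  "sph_pt \<theta> \<phi> = vector [sin \<theta> * cos \<phi>, sin \<theta> * sin \<phi>, cos \<theta>]"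

definition sph_angles :: "real^3 \<Rightarrow> real \<times> real" where
  "sph_angles p = (arccos (p $ 3), Arg (Complex (p $ 1) (p $ 2)))"

definition SO3 :: "(real^3^3) set" where
  "SO3 = {g. orthogonal_matrix g \<and> det g = 1}"

definition rot_act :: "real^3^3 \<Rightarrow> (real \<Rightarrow> real \<Rightarrow> complex) \<Rightarrow> real \<Rightarrow> real \<Rightarrow> complex" where
  "rot_act g h \<theta> \<phi> = (case sph_angles (matrix_inv g *v sph_pt \<theta> \<phi>) of (t, p) \<Rightarrow> h t p)"

text \<open>Normalized (left-)Haar measure on SO(3): a Borel probability measure on SO(3)
  invariant under left translation. (It exists and is unique.)\<close>
definition haar_SO3 :: "(real^3^3) measure \<Rightarrow> bool" where
  "haar_SO3 \<mu> \<longleftrightarrow>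
     prob_space \<mu> \<and> space \<mu> = SO3 \<and> sets \<mu> = sets (restrict_space borel SO3) \<and>
     (\<forall>g\<in>SO3. distr \<mu> \<mu> (\<lambda>h. g ** h) = \<mu>)"

definition tomo :: "(real \<Rightarrow> real \<Rightarrow> complex) \<Rightarrow> real \<Rightarrow> complex" where
  "tomo h \<phi> = h (pi / 2) \<phi>"

definition unproj_m2 ::
  "(real^3^3) measure \<Rightarrow> (nat \<Rightarrow> real \<Rightarrow> real \<Rightarrow> complex) \<Rightarrow> nat \<Rightarrow> nat
     \<Rightarrow> real \<Rightarrow> real \<Rightarrow> real \<Rightarrow> real \<Rightarrow> complex" where
  "unproj_m2 \<mu> f r1 r2 \<theta>1 \<phi>1 \<theta>2 \<phi>2 =
     (LINT g|\<mu>. rot_act g (f r1) \<theta>1 \<phi>1 * cnj (rot_act g (f r2) \<theta>2 \<phi>2))"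

definition proj_m2 ::
  "(real^3^3) measure \<Rightarrow> (nat \<Rightarrow> real \<Rightarrow> real \<Rightarrow> complex) \<Rightarrow> nat \<Rightarrow> nat
     \<Rightarrow> real \<Rightarrow> real \<Rightarrow> complex" where
  "proj_m2 \<mu> f r1 r2 \<phi>1 \<phi>2 =
     (LINT g|\<mu>. tomo (rot_act g (f r1)) \<phi>1 * cnj (tomo (rot_act g (f r2)) \<phi>2))"

end

theory Submission
  imports Defs
begin

lemma cont_mmul: "continuous_on UNIV (\<lambda>g::real^3^3. (h::real^3^3) ** g)"
  unfolding matrix_matrix_mult_def
  by (intro continuous_intros continuous_on_id)

lemma meas_mmul:
  assumes "h \<in> SO3"
  shows "(\<lambda>g. h ** g) \<in> measurable (restrict_space borel SO3) (restrict_space borel SO3)"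
proof (rule measurable_restrict_space3)
  show "(\<lambda>g::real^3^3. h ** g) \<in> borel \<rightarrow>\<^sub>M borel"
    using borel_measurable_continuous_onI[OF cont_mmul[of h]] by simp
  show "(\<lambda>g::real^3^3. h ** g) \<in> SO3 \<rightarrow> SO3"
    using assms by (auto simp: SO3_def orthogonal_matrix_mul det_mul)
qed

lemma SO3_transpose: "h \<in> SO3 \<Longrightarrow> transpose h \<in> SO3"
  by (auto simp: SO3_def orthogonal_matrix_def det_transpose)

lemma haar_invariant:
  fixes \<Phi> :: "real^3^3 \<Rightarrow> complex"
  assumes H: "haar_SO3 \<mu>" and h: "h \<in> SO3"
  shows "(LINT g|\<mu>. \<Phi> (h ** g)) = (LINT g|\<mu>. \<Phi> g)"
proof -
  have sp: "space \<mu> = SO3" and st: "sets \<mu> = sets (restrict_space borel SO3)"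
    and inv: "distr \<mu> \<mu> (\<lambda>g. h ** g) = \<mu>"
    using H h by (auto simp: haar_SO3_def)
  have mcong: "measurable \<mu> \<mu> = measurable (restrict_space borel SO3) (restrict_space borel SO3)"
    by (rule measurable_cong_sets[OF st st])
  have T: "(\<lambda>g. h ** g) \<in> measurable \<mu> \<mu>"
    using meas_mmul[OF h] mcong by simp
  have T': "(\<lambda>g. transpose h ** g) \<in> measurable \<mu> \<mu>"
    using meas_mmul[OF SO3_transpose[OF h]] mcong by simp
  have hh: "transpose h ** (h ** g) = g" for g :: "real^3^3"
    using h by (simp add: SO3_def orthogonal_matrix_def matrix_mul_assoc)
  show ?thesis
  proof (cases "\<Phi> \<in> borel_measurable \<mu>")
    case True
    have "(LINT g|\<mu>. \<Phi> g) = integral\<^sup>L (distr \<mu> \<mu> (\<lambda>g. h ** g)) \<Phi>"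
      using inv by simp
    also have "\<dots> = (LINT g|\<mu>. \<Phi> (h ** g))"
      by (rule integral_distr[OF T True])
    finally show ?thesis by simp
  next
    case False
    have "(\<lambda>g. \<Phi> (h ** g)) \<notin> borel_measurable \<mu>"
    proof
      assume "(\<lambda>g. \<Phi> (h ** g)) \<in> borel_measurable \<mu>"
      then have "(\<lambda>g. \<Phi> (h ** (transpose h ** g))) \<in> borel_measurable \<mu>"
        using measurable_compose[OF T'] by blast
      moreover have "h ** (transpose h ** g) = g" for g :: "real^3^3"
        using h by (simp add: SO3_def orthogonal_matrix_def matrix_mul_assoc)
      ultimately show False using False by simp
    qed
    then show ?thesis using False
      by (metis borel_measurable_integrable not_integrable_integral_eq)
  qed
qed

lemma minv_orth:
  fixes g :: "real^3^3"
  assumes "orthogonal_matrix g"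
  shows "matrix_inv g = transpose g"
proof -
  let ?A = "matrix_inv g"
  have "g ** ?A = mat 1 \<and> ?A ** g = mat 1"
    unfolding matrix_inv_def
    by (rule someI[of _ "transpose g"]) (use assms in \<open>simp add: orthogonal_matrix_def\<close>)
  then have "?A = ?A ** (g ** transpose g)" and "?A ** g = mat 1"
    using assms by (auto simp: orthogonal_matrix_def)
  then show ?thesis by (metis matrix_mul_assoc matrix_mul_lid)
qed

lemma unproj_rot:
  assumes H: "haar_SO3 \<mu>" and h: "h \<in> SO3"
    and e1: "sph_pt t1 p1 = h *v sph_pt a1 b1" and e2: "sph_pt t2 p2 = h *v sph_pt a2 b2"
  shows "unproj_m2 \<mu> f r1 r2 t1 p1 t2 p2 = unproj_m2 \<mu> f r1 r2 a1 b1 a2 b2"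
proof -
  have sp: "space \<mu> = SO3" using H by (simp add: haar_SO3_def)
  define K where "K = (\<lambda>(g::real^3^3) x1 x2.
     (case sph_angles (transpose g *v x1) of (t, p) \<Rightarrow> f r1 t p) *
     cnj (case sph_angles (transpose g *v x2) of (t, p) \<Rightarrow> f r2 t p))"
  have "unproj_m2 \<mu> f r1 r2 t1 p1 t2 p2 = (LINT g|\<mu>. K g (h *v sph_pt a1 b1) (h *v sph_pt a2 b2))"
    unfolding unproj_m2_def rot_act_def K_def e1[symmetric] e2[symmetric]
    by (intro Bochner_Integration.integral_cong refl) (auto simp: sp SO3_def minv_orth)
  also have "\<dots> = (LINT g|\<mu>. (\<lambda>g. K g (sph_pt a1 b1) (sph_pt a2 b2)) (transpose h ** g))"
  proof -
    have eq: "transpose (transpose h ** g) *v y = transpose g *v (h *v y)" for g :: "real^3^3" and y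
      by (metis matrix_transpose_mul transpose_transpose matrix_vector_mul_assoc)
    show ?thesis by (simp only: K_def eq)
  qed
  also have "\<dots> = (LINT g|\<mu>. K g (sph_pt a1 b1) (sph_pt a2 b2))"
    by (rule haar_invariant[OF H SO3_transpose[OF h]])
  also have "\<dots> = unproj_m2 \<mu> f r1 r2 a1 b1 a2 b2"
    unfolding unproj_m2_def rot_act_def K_def
    by (intro Bochner_Integration.integral_cong refl) (auto simp: sp SO3_def minv_orth)
  finally show ?thesis .
qed


lemma norm3: "(norm (v::real^3))^2 = (v$1)^2 + (v$2)^2 + (v$3)^2"
  unfolding power2_norm_eq_inner inner_vec_def sum_3 by (simp add: power2_eq_square)

lemma norm_sph_pt: "norm (sph_pt t p) = 1"
proof -
  have e: "(sin t * cos p)^2 + (sin t * sin p)^2 = (sin t)^2 * ((sin p)^2 + (cos p)^2)"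
    by algebra
  have "(norm (sph_pt t p))^2 = 1"
    unfolding norm3 sph_pt_def vector_3 e by simp
  then show ?thesis using norm_ge_zero[of "sph_pt t p"] by (auto simp add: power2_eq_1_iff)
qed

lemma sph_pt_eq: "sph_pt (pi/2) \<psi> = vector [cos \<psi>, sin \<psi>, 0]"
  by (simp add: sph_pt_def)

lemma axis1: "sph_pt (pi/2) 0 = axis 1 1"
  by (simp add: sph_pt_def vec_eq_iff forall_3 axis_def)

lemma equator_rot:
  "\<exists>h \<psi>. h \<in> SO3 \<and> sph_pt t1 p1 = h *v sph_pt (pi/2) 0 \<and> sph_pt t2 p2 = h *v sph_pt (pi/2) \<psi>"
proof -
  obtain A :: "real^3^3" where A: "rotation_matrix A" "A *v axis 1 1 = sph_pt t1 p1"
    using rotation_matrix_exists_basis[of "sph_pt t1 p1" 1] norm_sph_pt by auto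
  have oA: "orthogonal_matrix A" using A by (simp add: rotation_matrix_def)
  define y where "y = transpose A *v sph_pt t2 p2"
  have "norm y = 1"
  proof -
    have "orthogonal_transformation (\<lambda>x. transpose A *v x)"
      by (simp only: orthogonal_transformation_matrix matrix_vector_mul_linear matrix_of_matrix_vector_mul orthogonal_matrix_transpose oA simp_thms)
    then have "norm (transpose A *v sph_pt t2 p2) = norm (sph_pt t2 p2)"
      by (rule orthogonal_transformation_norm)
    then show ?thesis unfolding y_def norm_sph_pt .
  qed
  then have ny: "(y$1)^2 + (y$2)^2 + (y$3)^2 = 1" using norm3[of y] by simp
  define r where "r = sqrt ((y$2)^2 + (y$3)^2)"
  have r0: "r \<ge> 0" by (simp add: r_def)
  have r2: "r^2 = (y$2)^2 + (y$3)^2" by (simp add: r_def)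
  define c where "c = (if r = 0 then 1 else y$2 / r)"
  define s where "s = (if r = 0 then 0 else y$3 / r)"
  have cs: "c^2 + s^2 = 1"
    using r2 by (auto simp: c_def s_def power_divide add_divide_distrib[symmetric])
  have cr: "c * r = y$2" and sr: "s * r = y$3"
    using r2 by (auto simp: c_def s_def)
  define B :: "real^3^3" where "B = vector [vector [1,0,0], vector [0,c,-s], vector [0,s,c]]"
  have oB: "orthogonal_matrix B"
    unfolding orthogonal_matrix B_def
    using cs by (simp add: matrix_matrix_mult_def transpose_def mat_def vec_eq_iff forall_3 sum_3 power2_eq_square algebra_simps)
  have dB: "det B = 1"
    unfolding B_def det_3 using cs by (simp add: power2_eq_square)
  define \<psi> where "\<psi> = Arg (Complex (y$1) r)"
  have cm: "cmod (Complex (y$1) r) = 1"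
    using ny r2 by (simp add: cmod_def)
  then have nz: "Complex (y$1) r \<noteq> 0" by auto
  have cpsi: "cos \<psi> = y$1" and spsi: "sin \<psi> = r"
    unfolding \<psi>_def using cos_Arg[OF nz] sin_Arg[OF nz] cm by simp_all
  have By: "B *v sph_pt (pi/2) \<psi> = y"
    unfolding sph_pt_eq B_def cpsi spsi
    using cr sr by (simp add: matrix_vector_mult_def vec_eq_iff forall_3 sum_3 mult.commute)
  have Be: "B *v axis 1 1 = axis 1 1"
    unfolding B_def by (simp add: matrix_vector_mult_def vec_eq_iff forall_3 sum_3 axis_def)
  show ?thesis
  proof (intro exI conjI)
    show "A ** B \<in> SO3"
      using A oB dB by (simp add: SO3_def rotation_matrix_def orthogonal_matrix_mul det_mul)
    show "sph_pt t1 p1 = (A ** B) *v sph_pt (pi/2) 0"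
    proof -
      have "(A ** B) *v sph_pt (pi/2) 0 = A *v (B *v axis 1 1)"
        by (simp only: matrix_vector_mul_assoc axis1)
      then show ?thesis by (simp only: Be A(2))
    qed
    have "A ** transpose A = mat 1" using oA by (simp add: orthogonal_matrix_def)
    then show "sph_pt t2 p2 = (A ** B) *v sph_pt (pi/2) \<psi>"
    proof -
      have "(A ** B) *v sph_pt (pi/2) \<psi> = A *v (B *v sph_pt (pi/2) \<psi>)"
        by (simp only: matrix_vector_mul_assoc)
      also have "\<dots> = A *v (transpose A *v sph_pt t2 p2)" by (simp only: By y_def)
      also have "\<dots> = (A ** transpose A) *v sph_pt t2 p2" by (simp only: matrix_vector_mul_assoc)
      finally show ?thesis using \<open>A ** transpose A = mat 1\<close> by simp
    qed
  qed
qed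
lemma proj_unproj: "proj_m2 \<mu> f r1 r2 \<phi>1 \<phi>2 = unproj_m2 \<mu> f r1 r2 (pi/2) \<phi>1 (pi/2) \<phi>2"
  unfolding proj_m2_def unproj_m2_def tomo_def ..

theorem lemma4p1:
  fixes L R :: nat
    and A A' :: "nat \<Rightarrow> int \<Rightarrow> nat \<Rightarrow> complex"
    and \<mu> :: "(real^3^3) measure"
  assumes "R \<ge> 1"
    and "haar_SO3 \<mu>"
  shows "(\<forall>r1\<in>{1..R}. \<forall>r2\<in>{1..R}. \<forall>\<phi>1 \<phi>2.
            proj_m2 \<mu> (bandlimited L A) r1 r2 \<phi>1 \<phi>2
              = proj_m2 \<mu> (bandlimited L A') r1 r2 \<phi>1 \<phi>2)
     \<longleftrightarrow>
         (\<forall>r1\<in>{1..R}. \<forall>r2\<in>{1..R}. \<forall>\<theta>1 \<phi>1 \<theta>2 \<phi>2.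
            unproj_m2 \<mu> (bandlimited L A) r1 r2 \<theta>1 \<phi>1 \<theta>2 \<phi>2
              = unproj_m2 \<mu> (bandlimited L A') r1 r2 \<theta>1 \<phi>1 \<theta>2 \<phi>2)"
proof
  assume P: "\<forall>r1\<in>{1..R}. \<forall>r2\<in>{1..R}. \<forall>\<phi>1 \<phi>2.
            proj_m2 \<mu> (bandlimited L A) r1 r2 \<phi>1 \<phi>2
              = proj_m2 \<mu> (bandlimited L A') r1 r2 \<phi>1 \<phi>2"
  show "\<forall>r1\<in>{1..R}. \<forall>r2\<in>{1..R}. \<forall>\<theta>1 \<phi>1 \<theta>2 \<phi>2.
            unproj_m2 \<mu> (bandlimited L A) r1 r2 \<theta>1 \<phi>1 \<theta>2 \<phi>2
              = unproj_m2 \<mu> (bandlimited L A') r1 r2 \<theta>1 \<phi>1 \<theta>2 \<phi>2"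
  proof (intro ballI allI)
    fix r1 r2 t1 p1 t2 p2
    assume r: "r1 \<in> {1..R}" "r2 \<in> {1..R}"
    obtain h \<psi> where h: "h \<in> SO3" "sph_pt t1 p1 = h *v sph_pt (pi/2) 0"
        "sph_pt t2 p2 = h *v sph_pt (pi/2) \<psi>"
      using equator_rot[of t1 p1 t2 p2] by metis
    have "unproj_m2 \<mu> (bandlimited L A) r1 r2 t1 p1 t2 p2
          = unproj_m2 \<mu> (bandlimited L A) r1 r2 (pi/2) 0 (pi/2) \<psi>"
      by (rule unproj_rot[OF assms(2) h])
    also have "\<dots> = proj_m2 \<mu> (bandlimited L A) r1 r2 0 \<psi>"
      by (simp only: proj_unproj)
    also have "\<dots> = proj_m2 \<mu> (bandlimited L A') r1 r2 0 \<psi>"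
      by (rule P[rule_format, OF r])
    also have "\<dots> = unproj_m2 \<mu> (bandlimited L A') r1 r2 (pi/2) 0 (pi/2) \<psi>"
      by (simp only: proj_unproj)
    also have "\<dots> = unproj_m2 \<mu> (bandlimited L A') r1 r2 t1 p1 t2 p2"
      by (rule unproj_rot[OF assms(2) h, symmetric])
    finally show "unproj_m2 \<mu> (bandlimited L A) r1 r2 t1 p1 t2 p2
          = unproj_m2 \<mu> (bandlimited L A') r1 r2 t1 p1 t2 p2" .
  qed
next
  assume U: "\<forall>r1\<in>{1..R}. \<forall>r2\<in>{1..R}. \<forall>\<theta>1 \<phi>1 \<theta>2 \<phi>2.
            unproj_m2 \<mu> (bandlimited L A) r1 r2 \<theta>1 \<phi>1 \<theta>2 \<phi>2
              = unproj_m2 \<mu> (bandlimited L A') r1 r2 \<theta>1 \<phi>1 \<theta>2 \<phi>2"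
  then show "\<forall>r1\<in>{1..R}. \<forall>r2\<in>{1..R}. \<forall>\<phi>1 \<phi>2.
            proj_m2 \<mu> (bandlimited L A) r1 r2 \<phi>1 \<phi>2
              = proj_m2 \<mu> (bandlimited L A') r1 r2 \<phi>1 \<phi>2"
  proof (intro ballI allI)
    fix r1 r2 p1 p2
    assume r: "r1 \<in> {1..R}" "r2 \<in> {1..R}"
    show "proj_m2 \<mu> (bandlimited L A) r1 r2 p1 p2 = proj_m2 \<mu> (bandlimited L A') r1 r2 p1 p2"
      unfolding proj_unproj by (rule U[rule_format, OF r])
  qed
qed

end
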